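(* There is a universal constant $C$ such that the following holds. Let $G=(V,E,m,w)$ be a weighted graph with an intrinsic metric $\rho$ such that all balls $B_R(x)$ are finite and the jump size $s=\sup_{x\sim y}\rho(x,y)$ is finite, and fix $x_0\in V$. For any ancient solution $u$ of $D_t u=\Delta u$ on $V\times\mathbb{Z}_-$ and any $R\in\mathbb{N}$ with $R\ge s$, $$R^2\sum_{\widetilde{Q}_R}\Gamma(u)+R^4\sum_{\widetilde{Q}_R}(D_t u)^2\le C\sum_{\widetilde{Q}_{9R}}u^2.$$
   Context: A weighted graph $G=(V,E,m,w)$ consists of a locally finite, simple, undirected, connected graph $(V,E)$, a symmetric edge weight $w:E\to(0,\infty)$ (extended by $w_{xy}=0$ if $x\not\sim y$), and a vertex weight $m:V\to(0,\infty)$. The Laplacian is $\Delta f(x)=\sum_{y\sim x}\frac{w_{xy}}{m_x}(f(y)-f(x))$. A (pseudo)metric $\rho$ on $V$ is intrinsic if $\sum_{y\sim x}w_{xy}\rho^2(x,y)\le m_x$ for all $x$; $B_R(x)=\{y:\rho(y,x)\le R\}$, $B_R:=B_R(x_0)$. $\mathbb{Z}_-=\mathbb{Z}\cap(-\infty,0]$; $D_t u(x,t)=u(x,t)-u(x,t-1)$; an ancient solution is $u:V\times\mathbb{Z}_-\to\mathbb{R}$ with $D_tu=\Delta u$ for all $(x,t)$. $\Gamma(f)(x)=\frac12\sum_{y}\frac{w_{xy}}{m_x}(f(y)-f(x))^2$, applied to $u(\cdot,t)$. $\widetilde{Q}_R=B_R\times([-R^2,0]\cap\mathbb{Z})$ and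 $\sum_{\widetilde{Q}_R}F:=\sum_{t=-R^2}^0\sum_{x\in B_R}F(x,t)m_x$. *)

theory Defs
  imports Complex_Main
begin

text \<open>Vertices are natural numbers; the vertex set is V. Edge weight w is extended by 0
  off the edge set; x ~ y iff w x y > 0.\<close>

definition nbrs :: "(nat \<Rightarrow> nat \<Rightarrow> real) \<Rightarrow> nat \<Rightarrow> nat set" where
  "nbrs w x = {y. w x y > 0}"

definition weighted_graph :: "nat set \<Rightarrow> (nat \<Rightarrow> nat \<Rightarrow> real) \<Rightarrow> (nat \<Rightarrow> real) \<Rightarrow> bool" where
  "weighted_graph V w m \<longleftrightarrow>
     V \<noteq> {} \<and>
     (\<forall>x y. w x y = w y x) \<and> (\<forall>x y. w x y \<ge> 0) \<and> (\<forall>x. w x x = 0) \<and>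
     (\<forall>x y. w x y > 0 \<longrightarrow> x \<in> V \<and> y \<in> V) \<and>
     (\<forall>x\<in>V. m x > 0) \<and>
     (\<forall>x\<in>V. finite (nbrs w x)) \<and>
     (\<forall>x\<in>V. \<forall>y\<in>V. (x, y) \<in> {(a, b). w a b > 0}\<^sup>*)"

definition laplacian :: "(nat \<Rightarrow> nat \<Rightarrow> real) \<Rightarrow> (nat \<Rightarrow> real) \<Rightarrow> (nat \<Rightarrow> real) \<Rightarrow> nat \<Rightarrow> real" where
  "laplacian w m f x = (\<Sum>y\<in>nbrs w x. w x y / m x * (f y - f x))"

definition Gamma :: "(nat \<Rightarrow> nat \<Rightarrow> real) \<Rightarrow> (nat \<Rightarrow> real) \<Rightarrow> (nat \<Rightarrow> real) \<Rightarrow> nat \<Rightarrow> real" where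
  "Gamma w m f x = (1/2) * (\<Sum>y\<in>nbrs w x. w x y / m x * (f y - f x)^2)"

definition intrinsic_pseudometric ::
  "nat set \<Rightarrow> (nat \<Rightarrow> nat \<Rightarrow> real) \<Rightarrow> (nat \<Rightarrow> real) \<Rightarrow> (nat \<Rightarrow> nat \<Rightarrow> real) \<Rightarrow> bool" where
  "intrinsic_pseudometric V w m \<rho> \<longleftrightarrow>
     (\<forall>x\<in>V. \<rho> x x = 0) \<and>
     (\<forall>x\<in>V. \<forall>y\<in>V. \<rho> x y \<ge> 0 \<and> \<rho> x y = \<rho> y x) \<and>
     (\<forall>x\<in>V. \<forall>y\<in>V. \<forall>z\<in>V. \<rho> x z \<le> \<rho> x y + \<rho> y z) \<and>
     (\<forall>x\<in>V. (\<Sum>y\<in>nbrs w x. w x y * (\<rho> x y)^2) \<le> m x)"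

definition rball :: "nat set \<Rightarrow> (nat \<Rightarrow> nat \<Rightarrow> real) \<Rightarrow> nat \<Rightarrow> real \<Rightarrow> nat set" where
  "rball V \<rho> x R = {y\<in>V. \<rho> y x \<le> R}"

definition ancient_solution ::
  "nat set \<Rightarrow> (nat \<Rightarrow> nat \<Rightarrow> real) \<Rightarrow> (nat \<Rightarrow> real) \<Rightarrow> (nat \<Rightarrow> int \<Rightarrow> real) \<Rightarrow> bool" where
  "ancient_solution V w m u \<longleftrightarrow>
     (\<forall>x\<in>V. \<forall>t::int. t \<le> 0 \<longrightarrow> u x t - u x (t - 1) = laplacian w m (\<lambda>y. u y t) x)"

definition Dt :: "(nat \<Rightarrow> int \<Rightarrow> real) \<Rightarrow> nat \<Rightarrow> int \<Rightarrow> real" where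
  "Dt u x t = u x t - u x (t - 1)"

definition sumQ :: "nat set \<Rightarrow> (nat \<Rightarrow> nat \<Rightarrow> real) \<Rightarrow> (nat \<Rightarrow> real) \<Rightarrow> nat \<Rightarrow> nat
                    \<Rightarrow> (nat \<Rightarrow> int \<Rightarrow> real) \<Rightarrow> real" where
  "sumQ V \<rho> m x0 R F = (\<Sum>t\<in>{- ((int R)^2)..0}. \<Sum>x\<in>rball V \<rho> x0 (real R). F x t * m x)"

end

theory Submission
  imports Defs
begin


lemma sum_swap_w:
  assumes "finite A" "\<And>x y. w x y = w y x"
  shows "(\<Sum>x\<in>A. \<Sum>y\<in>A. w x y * F x y) = (\<Sum>x\<in>A. \<Sum>y\<in>A. w x y * (F y x :: real))"
proof -
  have "(\<Sum>x\<in>A. \<Sum>y\<in>A. w x y * F x y) = (\<Sum>y\<in>A. \<Sum>x\<in>A. w x y * F x y)"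
    by (rule sum.swap)
  also have "\<dots> = (\<Sum>y\<in>A. \<Sum>x\<in>A. w y x * F x y)"
    using assms(2) by (intro sum.cong refl) metis
  finally show ?thesis .
qed

lemma sbp:
  assumes "finite A" "\<And>x y. w x y = w y x"
  shows "(\<Sum>x\<in>A. \<Sum>y\<in>A. w x y * (f x * (h y - h x))) =
     -(1/2) * (\<Sum>x\<in>A. \<Sum>y\<in>A. w x y * ((f y - f x) * (h y - (h x::real))))"
proof -
  let ?S = "(\<Sum>x\<in>A. \<Sum>y\<in>A. w x y * (f x * (h y - h x)))"
  have 1: "?S = (\<Sum>x\<in>A. \<Sum>y\<in>A. w x y * (f y * (h x - h y)))"
    by (rule sum_swap_w[OF assms])
  have "?S + ?S = (\<Sum>x\<in>A. \<Sum>y\<in>A. w x y * (f x * (h y - h x)) + w x y * (f y * (h x - h y)))"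
    by (subst (2) 1) (simp add: sum.distrib)
  also have "\<dots> = - (\<Sum>x\<in>A. \<Sum>y\<in>A. w x y * ((f y - f x) * (h y - h x)))"
    by (simp add: sum_negf[symmetric] algebra_simps)
  finally show ?thesis by linarith
qed

lemma sum_int_nat: "(\<Sum>t\<in>{-(int N)..0}. f t) = (\<Sum>k\<le>N. (f (- int k) :: real))"
  by (rule sum.reindex_bij_witness[of _ "\<lambda>k. - int k" "\<lambda>t. nat (-t)"]) auto

lemma clamp_lip: "\<bar>min 1 (max 0 a) - min 1 (max 0 b)\<bar> \<le> \<bar>a - (b::real)\<bar>"
  by (simp add: min_def max_def abs_if)

locale setting =
  fixes V :: "nat set" and w :: "nat \<Rightarrow> nat \<Rightarrow> real" and m :: "nat \<Rightarrow> real"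
    and \<rho> :: "nat \<Rightarrow> nat \<Rightarrow> real" and x0 :: nat and u :: "nat \<Rightarrow> int \<Rightarrow> real" and R :: nat
  assumes wg: "weighted_graph V w m" and ip: "intrinsic_pseudometric V w m \<rho>"
    and fin: "\<forall>x\<in>V. \<forall>r. finite (rball V \<rho> x r)" and x0V: "x0 \<in> V"
    and anc: "ancient_solution V w m u" and jump: "\<forall>x y. w x y > 0 \<longrightarrow> \<rho> x y \<le> real R"
    and Rpos: "1 \<le> R"
begin

definition "rr x = \<rho> x x0"
definition "Bl c = rball V \<rho> x0 (c * real R)"
definition "A = Bl 9"
definition "eta c x = min 1 (max 0 (c - rr x / real R))"
definition "ut k x = u x (- int k)"
definition "NN = (real R)^2"

lemma wsym: "w x y = w y x" using wg unfolding weighted_graph_def by blast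
lemma wnn: "0 \<le> w x y" using wg unfolding weighted_graph_def by blast
lemma wV: "w x y > 0 \<Longrightarrow> x \<in> V \<and> y \<in> V" using wg unfolding weighted_graph_def by blast
lemma w0: "\<not> w x y > 0 \<Longrightarrow> w x y = 0" using wnn[of x y] by linarith
lemma mpos: "x \<in> V \<Longrightarrow> m x > 0" using wg unfolding weighted_graph_def by blast
lemma nbrs_fin: "x \<in> V \<Longrightarrow> finite (nbrs w x)" using wg unfolding weighted_graph_def by blast
lemma rho_nn: "x \<in> V \<Longrightarrow> y \<in> V \<Longrightarrow> 0 \<le> \<rho> x y" using ip unfolding intrinsic_pseudometric_def by blast
lemma rho_sym: "x \<in> V \<Longrightarrow> y \<in> V \<Longrightarrow> \<rho> x y = \<rho> y x" using ip unfolding intrinsic_pseudometric_def by blast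
lemma rho_tri: "x \<in> V \<Longrightarrow> y \<in> V \<Longrightarrow> z \<in> V \<Longrightarrow> \<rho> x z \<le> \<rho> x y + \<rho> y z"
  using ip unfolding intrinsic_pseudometric_def by blast
lemma intr: "x \<in> V \<Longrightarrow> (\<Sum>y\<in>nbrs w x. w x y * (\<rho> x y)^2) \<le> m x"
  using ip unfolding intrinsic_pseudometric_def by blast

lemma NN_pos: "NN > 0" using Rpos unfolding NN_def by simp
lemma R_pos: "real R > 0" using Rpos by simp

lemma mem_Bl: "x \<in> Bl c \<longleftrightarrow> x \<in> V \<and> rr x \<le> c * real R"
  unfolding Bl_def rball_def rr_def by auto
lemma Bl_fin: "finite (Bl c)" using fin x0V unfolding Bl_def by blast
lemma A_fin: "finite A" unfolding A_def by (rule Bl_fin)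
lemma A_V: "x \<in> A \<Longrightarrow> x \<in> V" unfolding A_def mem_Bl by blast
lemma Bl_mono: "c \<le> d \<Longrightarrow> Bl c \<subseteq> Bl d"
  unfolding mem_Bl subset_iff using R_pos
  by (meson mult_right_mono less_imp_le order_trans)

lemma rr_lip: "x \<in> V \<Longrightarrow> y \<in> V \<Longrightarrow> \<bar>rr y - rr x\<bar> \<le> \<rho> x y"
  unfolding rr_def using rho_tri[of y x x0] rho_tri[of x y x0] rho_sym[of x y] x0V by auto

lemma edge_rr: "w x y > 0 \<Longrightarrow> rr y \<le> rr x + real R"
  using rr_lip[of x y] wV[of x y] jump by force

lemma nbrs_sub: "x \<in> V \<Longrightarrow> rr x \<le> 8 * real R \<Longrightarrow> nbrs w x \<subseteq> A"
proof
  fix y assume xV: "x \<in> V" and r: "rr x \<le> 8 * real R" and y: "y \<in> nbrs w x"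
  then have wp: "w x y > 0" unfolding nbrs_def by simp
  show "y \<in> A" unfolding A_def mem_Bl using edge_rr[OF wp] wV[OF wp] r by simp
qed

lemma eta_nn: "0 \<le> eta c x" unfolding eta_def by simp
lemma eta_le1: "eta c x \<le> 1" unfolding eta_def by simp
lemma eta_one: "rr x \<le> (c - 1) * real R \<Longrightarrow> eta c x = 1"
  unfolding eta_def using R_pos by (simp add: field_simps)
lemma eta_nz: "eta c x \<noteq> 0 \<Longrightarrow> rr x < c * real R"
  unfolding eta_def using R_pos by (auto simp: field_simps min_def max_def split: if_splits)
lemma eta_lip: "x \<in> V \<Longrightarrow> y \<in> V \<Longrightarrow> \<bar>eta c y - eta c x\<bar> \<le> \<rho> x y / real R"
proof -
  assume xy: "x \<in> V" "y \<in> V"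
  have "\<bar>eta c y - eta c x\<bar> \<le> \<bar>(c - rr y / real R) - (c - rr x / real R)\<bar>"
    unfolding eta_def by (rule clamp_lip)
  also have "\<dots> = \<bar>rr y - rr x\<bar> / real R"
  proof -
    have "(c - rr y / real R) - (c - rr x / real R) = - ((rr y - rr x) / real R)"
      by (simp add: diff_divide_distrib)
    then show ?thesis using R_pos by simp
  qed
  also have "\<dots> \<le> \<rho> x y / real R" using rr_lip[OF xy] R_pos by (simp add: divide_right_mono)
  finally show ?thesis .
qed
lemma eta_lip_sq: "x \<in> V \<Longrightarrow> y \<in> V \<Longrightarrow> (eta c y - eta c x)^2 \<le> (\<rho> x y)^2 / NN"
proof -
  assume xy: "x \<in> V" "y \<in> V"
  have "(eta c y - eta c x)^2 = \<bar>eta c y - eta c x\<bar>^2" by simp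
  also have "\<dots> \<le> (\<rho> x y / real R)^2" by (rule power_mono[OF eta_lip[OF xy]]) simp
  finally show ?thesis unfolding NN_def by (simp add: power_divide)
qed

lemma lapA:
  assumes x: "x \<in> V" and sub: "c \<noteq> 0 \<Longrightarrow> nbrs w x \<subseteq> A"
  shows "c * (m x * laplacian w m h x) = (\<Sum>y\<in>A. w x y * (c * (h y - h x)))"
proof (cases "c = 0")
  case True then show ?thesis by simp
next
  case False
  have mx: "m x \<noteq> 0" using mpos[OF x] by simp
  have "m x * laplacian w m h x = (\<Sum>y\<in>nbrs w x. w x y * (h y - h x))"
    unfolding laplacian_def sum_distrib_left using mx by (intro sum.cong refl) (simp add: field_simps)
  also have "\<dots> = (\<Sum>y\<in>A. w x y * (h y - h x))"
    by (rule sum.mono_neutral_left[OF A_fin sub[OF False]]) (auto simp: nbrs_def w0)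
  finally show ?thesis by (simp add: sum_distrib_left algebra_simps)
qed

lemma nbrs_le:
  assumes x: "x \<in> V" and hnn: "\<And>y. 0 \<le> h y"
  shows "(\<Sum>y\<in>A. w x y * h y) \<le> (\<Sum>y\<in>nbrs w x. w x y * h y)"
proof -
  have "(\<Sum>y\<in>A. w x y * h y) = (\<Sum>y\<in>A \<inter> nbrs w x. w x y * h y)"
    by (rule sum.mono_neutral_right[OF A_fin]) (auto simp: nbrs_def w0)
  also have "\<dots> \<le> (\<Sum>y\<in>nbrs w x. w x y * h y)"
    by (rule sum_mono2[OF nbrs_fin[OF x]]) (auto intro: mult_nonneg_nonneg wnn hnn)
  finally show ?thesis .
qed

lemma intr_A: "x \<in> V \<Longrightarrow> (\<Sum>y\<in>A. w x y * (\<rho> x y)^2) \<le> m x"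
  using nbrs_le[of x "\<lambda>y. (\<rho> x y)^2"] intr[of x] by simp

lemma Gamma_A:
  assumes x: "x \<in> V" and sub: "nbrs w x \<subseteq> A"
  shows "2 * Gamma w m f x * m x = (\<Sum>y\<in>A. w x y * (f y - f x)^2)"
proof -
  have mx: "m x \<noteq> 0" using mpos[OF x] by simp
  have "2 * Gamma w m f x * m x = (\<Sum>y\<in>nbrs w x. w x y / m x * (f y - f x)^2) * m x"
    unfolding Gamma_def by simp
  also have "\<dots> = (\<Sum>y\<in>nbrs w x. w x y * (f y - f x)^2)"
    unfolding sum_distrib_right using mx by (intro sum.cong refl) (simp add: field_simps)
  also have "\<dots> = (\<Sum>y\<in>A. w x y * (f y - f x)^2)"
    by (rule sum.mono_neutral_left[OF A_fin sub]) (auto simp: nbrs_def w0)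
  finally show ?thesis .
qed

lemma anc_k: "x \<in> V \<Longrightarrow> ut k x - ut (Suc k) x = laplacian w m (ut k) x"
proof -
  assume x: "x \<in> V"
  have e: "ut k = (\<lambda>y. u y (- int k))" by (rule ext) (simp add: ut_def)
  have "- int (Suc k) = - int k - 1" by simp
  then show ?thesis using anc x unfolding ancient_solution_def e ut_def
    by (metis (no_types) neg_le_0_iff_le of_nat_0_le_iff)
qed

end

context setting begin

definition "E k = (\<Sum>x\<in>A. (eta 4 x)^2 * (ut k x)^2 * m x)"
definition "D k = (\<Sum>x\<in>A. \<Sum>y\<in>A. w x y * (eta 4 y * ut k y - eta 4 x * ut k x)^2)"
definition "M k = (\<Sum>x\<in>A. (ut k x)^2 * m x)"

lemma P1step: "E k - E (Suc k) + D k \<le> M k / NN"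
proof -
  define e where "e = eta 4"
  define h where "h = ut k"
  define h' where "h' = ut (Suc k)"
  define c where "c x = e x ^2 * h x" for x
  define L where "L = (\<Sum>x\<in>A. c x * (h x - h' x) * m x)"
  have L1: "L = (\<Sum>x\<in>A. \<Sum>y\<in>A. w x y * (c x * (h y - h x)))"
    unfolding L_def
  proof (rule sum.cong[OF refl])
    fix x assume x: "x \<in> A"
    hence xV: "x \<in> V" by (rule A_V)
    have "c x * (h x - h' x) * m x = c x * (m x * laplacian w m h x)"
      using anc_k[OF xV, of k] unfolding h_def h'_def by simp
    also have "\<dots> = (\<Sum>y\<in>A. w x y * (c x * (h y - h x)))"
    proof (rule lapA[OF xV])
      assume "c x \<noteq> 0"
      then have "eta 4 x \<noteq> 0" unfolding c_def e_def by auto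
      then have "rr x \<le> 8 * real R" using eta_nz[of 4 x] R_pos by linarith
      then show "nbrs w x \<subseteq> A" by (rule nbrs_sub[OF xV])
    qed
    finally show "c x * (h x - h' x) * m x = (\<Sum>y\<in>A. w x y * (c x * (h y - h x)))" .
  qed
  have L2: "L = -(1/2) * (\<Sum>x\<in>A. \<Sum>y\<in>A. w x y * ((c y - c x) * (h y - h x)))"
    using L1 sbp[OF A_fin, of w c h] wsym by simp
  have pw: "w x y * ((c y - c x) * (h y - h x)) = w x y * (e y * h y - e x * h x)^2
      - w x y * (h x * h y * (e y - e x)^2)" for x y
    unfolding c_def by (simp add: power2_eq_square algebra_simps)
  define Cr where "Cr = (\<Sum>x\<in>A. \<Sum>y\<in>A. w x y * (h x * h y * (e y - e x)^2))"
  have L3: "L = -(1/2) * D k + (1/2) * Cr"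
    unfolding L2 pw Cr_def D_def e_def[symmetric] h_def[symmetric]
    by (simp add: sum_subtractf algebra_simps)
  have cross: "Cr \<le> M k / NN"
  proof -
    have sw: "(\<Sum>x\<in>A. \<Sum>y\<in>A. w x y * ((h y)^2 * (e y - e x)^2))
        = (\<Sum>x\<in>A. \<Sum>y\<in>A. w x y * ((h x)^2 * (e y - e x)^2))"
    proof -
      have "(\<Sum>x\<in>A. \<Sum>y\<in>A. w x y * ((h y)^2 * (e y - e x)^2))
        = (\<Sum>x\<in>A. \<Sum>y\<in>A. w x y * ((h x)^2 * (e x - e y)^2))"
        by (rule sum_swap_w[OF A_fin wsym])
      also have "\<dots> = (\<Sum>x\<in>A. \<Sum>y\<in>A. w x y * ((h x)^2 * (e y - e x)^2))"
        by (simp add: power2_commute)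
      finally show ?thesis .
    qed
    have "Cr \<le> (\<Sum>x\<in>A. \<Sum>y\<in>A. w x y * (((h x)^2 + (h y)^2) / 2 * (e y - e x)^2))"
      unfolding Cr_def
    proof (intro sum_mono mult_left_mono wnn)
      fix x y
      have "2 * (h x * h y) \<le> (h x)^2 + (h y)^2" using sum_squares_bound[of "h x" "h y"] by simp
      then have "h x * h y \<le> ((h x)^2 + (h y)^2) / 2" by simp
      then show "h x * h y * (e y - e x)^2 \<le> ((h x)^2 + (h y)^2) / 2 * (e y - e x)^2"
        by (rule mult_right_mono) simp
    qed
    also have "\<dots> = (1/2) * ((\<Sum>x\<in>A. \<Sum>y\<in>A. w x y * ((h x)^2 * (e y - e x)^2))
        + (\<Sum>x\<in>A. \<Sum>y\<in>A. w x y * ((h y)^2 * (e y - e x)^2)))"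
      by (simp add: sum.distrib[symmetric] sum_distrib_left algebra_simps add_divide_distrib)
    also have "\<dots> = (\<Sum>x\<in>A. \<Sum>y\<in>A. w x y * ((h x)^2 * (e y - e x)^2))"
      using sw by simp
    finally have "Cr \<le> (\<Sum>x\<in>A. \<Sum>y\<in>A. w x y * ((h x)^2 * (e y - e x)^2))" .
    also have "\<dots> \<le> (\<Sum>x\<in>A. \<Sum>y\<in>A. w x y * ((h x)^2 * ((\<rho> x y)^2 / NN)))"
      unfolding e_def by (intro sum_mono mult_left_mono wnn eta_lip_sq A_V zero_le_power2) auto
    also have "\<dots> = (\<Sum>x\<in>A. (h x)^2 / NN * (\<Sum>y\<in>A. w x y * (\<rho> x y)^2))"
      by (simp add: sum_distrib_left algebra_simps)
    also have "\<dots> \<le> (\<Sum>x\<in>A. (h x)^2 / NN * m x)"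
      using NN_pos by (intro sum_mono mult_left_mono intr_A A_V) auto
    also have "\<dots> = M k / NN" unfolding M_def h_def by (simp add: sum_divide_distrib)
    finally show ?thesis .
  qed
  have lowL: "(1/2) * (E k - E (Suc k)) \<le> L"
  proof -
    have "(1/2) * (E k - E (Suc k)) = (1/2) * (\<Sum>x\<in>A. e x^2 * (h x)^2 * m x - e x^2 * (h' x)^2 * m x)"
      unfolding E_def e_def h_def h'_def by (simp add: sum_subtractf)
    also have "\<dots> = (\<Sum>x\<in>A. e x ^2 * m x * (((h x)^2 - (h' x)^2) / 2))"
      unfolding sum_distrib_left by (intro sum.cong refl) (simp add: algebra_simps)
    also have "\<dots> \<le> (\<Sum>x\<in>A. e x ^2 * m x * (h x * (h x - h' x)))"
    proof (intro sum_mono mult_left_mono)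
      fix x assume "x \<in> A"
      show "((h x)^2 - (h' x)^2) / 2 \<le> h x * (h x - h' x)"
        using zero_le_power2[of "h x - h' x"] by (simp add: power2_eq_square field_simps)
      show "0 \<le> e x ^2 * m x" using mpos[OF A_V[OF \<open>x \<in> A\<close>]] by simp
    qed
    also have "\<dots> = L" unfolding L_def c_def by (simp add: algebra_simps)
    finally show ?thesis .
  qed
  from L3 cross lowL show ?thesis by (simp add: algebra_simps)
qed

definition "vt k x = ut k x - ut (Suc k) x"
definition "X k = (\<Sum>x\<in>A. (eta 2 x)^2 * (vt k x)^2 * m x)"
definition "F k = (\<Sum>x\<in>A. \<Sum>y\<in>A. w x y * (eta 2 x * eta 2 y * (ut k y - ut k x)^2))"
definition "ind x = (if rr x < 2 * real R then 1 else (0::real))"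
definition "G k = (\<Sum>x\<in>A. \<Sum>y\<in>A. w x y * (ind x * (ut k y - ut k x)^2))"

lemma amgm: "(a::real) * b \<le> (a^2 + b^2) / 2"
  using sum_squares_bound[of a b] by simp

lemma ind_nn: "0 \<le> ind x" unfolding ind_def by simp

lemma T3_pw:
  assumes x: "x \<in> V" and y: "y \<in> V"
  shows "-((g::real) * (eta 2 y - eta 2 x) * eta 2 x * v)
     \<le> (1/2) * ((\<rho> x y)^2 * ((eta 2 x)^2 * v^2)) + ind x * g^2 / (2 * NN)"
proof (cases "eta 2 x = 0")
  case True
  then show ?thesis using ind_nn[of x] NN_pos by simp
next
  case False
  then have i: "ind x = 1" using eta_nz[of 2 x] unfolding ind_def by simp
  let ?ex = "eta 2 x" and ?ey = "eta 2 y"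
  have l: "\<bar>?ey - ?ex\<bar> \<le> \<rho> x y / real R" by (rule eta_lip[OF x y])
  have rnn: "0 \<le> \<rho> x y" by (rule rho_nn[OF x y])
  have "-(g * (?ey - ?ex) * ?ex * v) \<le> \<bar>g * (?ey - ?ex) * (?ex * v)\<bar>" by (simp add: mult.assoc)
  also have "\<dots> = \<bar>g\<bar> * \<bar>?ey - ?ex\<bar> * \<bar>?ex * v\<bar>" by (simp add: abs_mult)
  also have "\<dots> \<le> \<bar>g\<bar> * (\<rho> x y / real R) * \<bar>?ex * v\<bar>"
    by (intro mult_right_mono mult_left_mono l) auto
  also have "\<dots> = (\<rho> x y * \<bar>?ex * v\<bar>) * (\<bar>g\<bar> / real R)" by simp
  also have "\<dots> \<le> ((\<rho> x y * \<bar>?ex * v\<bar>)^2 + (\<bar>g\<bar> / real R)^2) / 2"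
    by (rule amgm)
  also have "\<dots> = (1/2) * ((\<rho> x y)^2 * (?ex^2 * v^2)) + ind x * g^2 / (2 * NN)"
    unfolding i NN_def by (simp add: power_mult_distrib power_divide field_simps)
  finally show ?thesis .
qed

lemma P2step: "2 * X k + F k - F (Suc k) \<le> 2 * G k / NN"
proof -
  define e where "e = eta 2"
  define h where "h = ut k"
  define h' where "h' = ut (Suc k)"
  define v where "v = vt k"
  define c where "c x = e x ^2 * v x" for x
  have vh: "v x = h x - h' x" for x unfolding v_def vt_def h_def h'_def by simp
  have X1: "X k = (\<Sum>x\<in>A. \<Sum>y\<in>A. w x y * (c x * (h y - h x)))"
    unfolding X_def
  proof (rule sum.cong[OF refl])
    fix x assume x: "x \<in> A"
    hence xV: "x \<in> V" by (rule A_V)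
    have "(eta 2 x)^2 * (vt k x)^2 * m x = c x * (m x * laplacian w m h x)"
      using anc_k[OF xV, of k] unfolding h_def c_def e_def v_def vt_def by (simp add: power2_eq_square)
    also have "\<dots> = (\<Sum>y\<in>A. w x y * (c x * (h y - h x)))"
    proof (rule lapA[OF xV])
      assume "c x \<noteq> 0"
      then have "eta 2 x \<noteq> 0" unfolding c_def e_def by auto
      then have "rr x \<le> 8 * real R" using eta_nz[of 2 x] R_pos by linarith
      then show "nbrs w x \<subseteq> A" by (rule nbrs_sub[OF xV])
    qed
    finally show "(eta 2 x)^2 * (vt k x)^2 * m x = (\<Sum>y\<in>A. w x y * (c x * (h y - h x)))" .
  qed
  have X2: "X k = -(1/2) * (\<Sum>x\<in>A. \<Sum>y\<in>A. w x y * ((c y - c x) * (h y - h x)))"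
    using X1 sbp[OF A_fin, of w c h] wsym by simp
  define T1 where "T1 = (\<Sum>x\<in>A. \<Sum>y\<in>A. w x y * (e x * e y * ((h y - h x) * ((h y - h x) - (h' y - h' x)))))"
  define T2 where "T2 = (\<Sum>x\<in>A. \<Sum>y\<in>A. w x y * ((h y - h x) * (e y - e x) * e y * v y))"
  define T3 where "T3 = (\<Sum>x\<in>A. \<Sum>y\<in>A. w x y * ((h y - h x) * (e y - e x) * e x * v x))"
  have pw: "w x y * ((c y - c x) * (h y - h x)) =
     w x y * (e x * e y * ((h y - h x) * ((h y - h x) - (h' y - h' x))))
     + w x y * ((h y - h x) * (e y - e x) * e y * v y)
     + w x y * ((h y - h x) * (e y - e x) * e x * v x)" for x y
    unfolding c_def vh by (simp add: power2_eq_square algebra_simps)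
  have X3: "X k = -(1/2) * (T1 + T2 + T3)"
    unfolding X2 pw T1_def T2_def T3_def by (simp add: sum.distrib)
  have T23: "T2 = T3"
  proof -
    have "T2 = (\<Sum>x\<in>A. \<Sum>y\<in>A. w x y * ((h x - h y) * (e x - e y) * e x * v x))"
      unfolding T2_def by (rule sum_swap_w[OF A_fin wsym])
    also have "\<dots> = T3" unfolding T3_def by (intro sum.cong refl) (simp add: algebra_simps)
    finally show ?thesis .
  qed
  have T1low: "(1/2) * (F k - F (Suc k)) \<le> T1"
  proof -
    have "F k - F (Suc k) = (\<Sum>x\<in>A. \<Sum>y\<in>A. w x y * (e x * e y * (h y - h x)^2)
        - w x y * (e x * e y * (h' y - h' x)^2))"
      unfolding F_def e_def h_def h'_def by (simp add: sum_subtractf)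
    moreover have "(1/2) * (\<Sum>x\<in>A. \<Sum>y\<in>A. w x y * (e x * e y * (h y - h x)^2)
        - w x y * (e x * e y * (h' y - h' x)^2)) = (\<Sum>x\<in>A. \<Sum>y\<in>A. w x y * (e x * e y * (((h y - h x)^2 - (h' y - h' x)^2) / 2)))"
      unfolding sum_distrib_left by (intro sum.cong refl) (simp add: algebra_simps)
    ultimately have "(1/2) * (F k - F (Suc k)) = (\<Sum>x\<in>A. \<Sum>y\<in>A. w x y * (e x * e y * (((h y - h x)^2 - (h' y - h' x)^2) / 2)))"
      by simp
    also have "\<dots> \<le> T1" unfolding T1_def
    proof (intro sum_mono mult_left_mono wnn)
      fix x y
      show "0 \<le> e x * e y" unfolding e_def by (simp add: eta_nn)
      have "((h y - h x)^2 - (h' y - h' x)^2) / 2 \<le> (h y - h x) * ((h y - h x) - (h' y - h' x))"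
        using zero_le_power2[of "(h y - h x) - (h' y - h' x)"] by (simp add: power2_eq_square field_simps)
      then show "((h y - h x)^2 - (h' y - h' x)^2) / 2 \<le> (h y - h x) * ((h y - h x) - (h' y - h' x))" .
    qed
    finally show ?thesis .
  qed
  have T3up: "- T3 \<le> (1/2) * X k + G k / (2 * NN)"
  proof -
    have "- T3 = (\<Sum>x\<in>A. \<Sum>y\<in>A. w x y * (-((h y - h x) * (e y - e x) * e x * v x)))"
      unfolding T3_def by (simp add: sum_negf[symmetric])
    also have "\<dots> \<le> (\<Sum>x\<in>A. \<Sum>y\<in>A. w x y * ((1/2) * ((\<rho> x y)^2 * ((e x)^2 * (v x)^2)) + ind x * (h y - h x)^2 / (2 * NN)))"
      unfolding e_def by (intro sum_mono mult_left_mono wnn T3_pw A_V) auto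
    also have "\<dots> = (\<Sum>x\<in>A. (1/2) * ((e x)^2 * (v x)^2) * (\<Sum>y\<in>A. w x y * (\<rho> x y)^2)) + G k / (2 * NN)"
      unfolding G_def h_def[symmetric] sum_divide_distrib sum.distrib[symmetric] sum_distrib_left
      by (intro sum.cong refl) (simp add: algebra_simps)
    also have "\<dots> \<le> (\<Sum>x\<in>A. (1/2) * ((e x)^2 * (v x)^2) * m x) + G k / (2 * NN)"
      by (intro add_right_mono sum_mono mult_left_mono intr_A A_V) auto
    also have "\<dots> = (1/2) * X k + G k / (2 * NN)"
      unfolding X_def e_def v_def sum_distrib_left by (simp add: algebra_simps)
    finally show ?thesis .
  qed
  have q1: "G k / (2 * NN) = (G k / NN) / 2" by simp
  have q2: "2 * G k / NN = 2 * (G k / NN)" by simp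
  have H: "\<And>q a b c t1 t2 t3 ::real. a = -(1/2) * (t1+t2+t3) \<Longrightarrow> t2 = t3 \<Longrightarrow> (1/2)*(b - c) \<le> t1
    \<Longrightarrow> -t3 \<le> 1/2 * a + q/2 \<Longrightarrow> 2 * a + b - c \<le> 2 * q" by (simp add: field_simps)
  show ?thesis unfolding q2 using H[OF X3 T23 T1low] T3up unfolding q1 by blast
qed

end

context setting begin

lemma E_nn: "0 \<le> E k" unfolding E_def by (intro sum_nonneg mult_nonneg_nonneg less_imp_le[OF mpos] A_V) auto
lemma M_nn: "0 \<le> M k" unfolding M_def by (intro sum_nonneg mult_nonneg_nonneg less_imp_le[OF mpos] A_V) auto
lemma X_nn: "0 \<le> X k" unfolding X_def by (intro sum_nonneg mult_nonneg_nonneg less_imp_le[OF mpos] A_V) auto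
lemma D_nn: "0 \<le> D k" unfolding D_def by (intro sum_nonneg mult_nonneg_nonneg wnn) auto
lemma F_nn: "0 \<le> F k" unfolding F_def by (intro sum_nonneg mult_nonneg_nonneg wnn eta_nn) auto
lemma G_nn: "0 \<le> G k" unfolding G_def by (intro sum_nonneg mult_nonneg_nonneg wnn ind_nn) auto

lemma E_le_M: "E k \<le> M k"
  unfolding E_def M_def
proof (rule sum_mono)
  fix x assume "x \<in> A"
  then have mx: "0 \<le> m x" using mpos[OF A_V] less_imp_le by blast
  have "(eta 4 x)^2 \<le> 1" using eta_nn[of 4 x] eta_le1[of 4 x] by (simp add: power_le_one)
  then have "(eta 4 x)^2 * ((ut k x)^2 * m x) \<le> 1 * ((ut k x)^2 * m x)"
    by (intro mult_right_mono) (auto intro: mult_nonneg_nonneg mx)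
  then show "(eta 4 x)^2 * (ut k x)^2 * m x \<le> (ut k x)^2 * m x" by (simp add: mult.assoc)
qed

lemma F_le_G: "F k \<le> G k"
proof -
  define e where "e = eta 2"
  define g where "g x y = (ut k y - ut k x)^2" for x y
  have "F k \<le> (\<Sum>x\<in>A. \<Sum>y\<in>A. w x y * (((e x)^2 + (e y)^2) / 2 * g x y))"
    unfolding F_def e_def[symmetric] g_def[symmetric]
  proof (intro sum_mono mult_left_mono wnn)
    fix x y
    have "e x * e y \<le> ((e x)^2 + (e y)^2) / 2" by (rule amgm)
    then show "e x * e y * g x y \<le> ((e x)^2 + (e y)^2) / 2 * g x y"
      by (rule mult_right_mono) (simp add: g_def)
  qed
  also have "\<dots> = (1/2) * ((\<Sum>x\<in>A. \<Sum>y\<in>A. w x y * ((e x)^2 * g x y))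
        + (\<Sum>x\<in>A. \<Sum>y\<in>A. w x y * ((e y)^2 * g x y)))"
    by (simp add: sum.distrib[symmetric] sum_distrib_left algebra_simps add_divide_distrib)
  also have "(\<Sum>x\<in>A. \<Sum>y\<in>A. w x y * ((e y)^2 * g x y)) = (\<Sum>x\<in>A. \<Sum>y\<in>A. w x y * ((e x)^2 * g y x))"
    by (rule sum_swap_w[OF A_fin wsym])
  also have "g y x = g x y" for x y unfolding g_def by (simp add: power2_commute)
  hence "(\<Sum>x\<in>A. \<Sum>y\<in>A. w x y * ((e x)^2 * g y x)) = (\<Sum>x\<in>A. \<Sum>y\<in>A. w x y * ((e x)^2 * g x y))"
    by simp
  finally have 1: "F k \<le> (\<Sum>x\<in>A. \<Sum>y\<in>A. w x y * ((e x)^2 * g x y))" by simp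
  also have "\<dots> \<le> G k" unfolding G_def g_def[symmetric]
  proof (intro sum_mono mult_left_mono wnn mult_right_mono)
    fix x y
    show "0 \<le> g x y" unfolding g_def by simp
    show "(e x)^2 \<le> ind x"
    proof (cases "e x = 0")
      case True then show ?thesis using ind_nn by simp
    next
      case False
      then have "ind x = 1" using eta_nz[of 2 x] unfolding ind_def e_def by simp
      then show ?thesis using eta_nn[of 2 x] eta_le1[of 2 x] unfolding e_def by (simp add: power_le_one)
    qed
  qed
  finally show ?thesis .
qed

lemma G_le_D: "G k \<le> D k"
  unfolding G_def D_def
proof (intro sum_mono)
  fix x y assume x: "x \<in> A" and y: "y \<in> A"
  show "w x y * (ind x * (ut k y - ut k x)^2) \<le> w x y * (eta 4 y * ut k y - eta 4 x * ut k x)^2"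
  proof (cases "ind x = 1 \<and> w x y > 0")
    case True
    then have rx: "rr x < 2 * real R" unfolding ind_def by (auto split: if_splits)
    have ry: "rr y \<le> rr x + real R" using True edge_rr by blast
    have "eta 4 x = 1" using rx by (intro eta_one) simp
    moreover have "eta 4 y = 1" using rx ry by (intro eta_one) simp
    ultimately show ?thesis using True by simp
  next
    case False
    then have "ind x = 0 \<or> w x y = 0" unfolding ind_def using w0 by auto
    then show ?thesis using wnn[of x y] by auto
  qed
qed

lemma Gam: "2 * (\<Sum>x\<in>Bl 1. Gamma w m (ut k) x * m x) \<le> G k"
proof -
  have sub: "Bl 1 \<subseteq> A" unfolding A_def by (rule Bl_mono) simp
  have "2 * (\<Sum>x\<in>Bl 1. Gamma w m (ut k) x * m x) = (\<Sum>x\<in>Bl 1. \<Sum>y\<in>A. w x y * (ind x * (ut k y - ut k x)^2))"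
    unfolding sum_distrib_left
  proof (rule sum.cong[OF refl])
    fix x assume x: "x \<in> Bl 1"
    then have xV: "x \<in> V" and rx: "rr x \<le> real R" unfolding mem_Bl by auto
    have i: "ind x = 1" using rx R_pos unfolding ind_def by simp
    have "nbrs w x \<subseteq> A" using rx R_pos by (intro nbrs_sub[OF xV]) simp
    from Gamma_A[OF xV this, of "ut k"]
    show "2 * (Gamma w m (ut k) x * m x) = (\<Sum>y\<in>A. w x y * (ind x * (ut k y - ut k x)^2))"
      unfolding i by (simp add: mult.assoc)
  qed
  also have "\<dots> \<le> G k" unfolding G_def
    by (rule sum_mono2[OF A_fin sub]) (intro sum_nonneg mult_nonneg_nonneg wnn ind_nn; simp)
  finally show ?thesis .
qed

lemma Vsq: "(\<Sum>x\<in>Bl 1. (vt k x)^2 * m x) \<le> X k"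
proof -
  have sub: "Bl 1 \<subseteq> A" unfolding A_def by (rule Bl_mono) simp
  have "(\<Sum>x\<in>Bl 1. (vt k x)^2 * m x) = (\<Sum>x\<in>Bl 1. (eta 2 x)^2 * (vt k x)^2 * m x)"
  proof (rule sum.cong[OF refl])
    fix x assume "x \<in> Bl 1"
    then have "eta 2 x = 1" unfolding mem_Bl by (intro eta_one) simp
    then show "(vt k x)^2 * m x = (eta 2 x)^2 * (vt k x)^2 * m x" by simp
  qed
  also have "\<dots> \<le> X k" unfolding X_def
    by (rule sum_mono2[OF A_fin sub]) (intro mult_nonneg_nonneg less_imp_le[OF mpos] A_V; auto)
  finally show ?thesis .
qed

lemma S1: "(\<Sum>k<n. D k) \<le> M n + (\<Sum>k<n. M k) / NN"
proof -
  have "(\<Sum>k<n. E k - E (Suc k) + D k) \<le> (\<Sum>k<n. M k / NN)"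
    by (rule sum_mono) (rule P1step)
  moreover have "(\<Sum>k<n. E k - E (Suc k) + D k) = (E 0 - E n) + (\<Sum>k<n. D k)"
    by (simp add: sum.distrib sum_lessThan_telescope')
  moreover have "(\<Sum>k<n. M k / NN) = (\<Sum>k<n. M k) / NN" by (simp add: sum_divide_distrib)
  ultimately show ?thesis using E_nn[of 0] E_le_M[of n] by linarith
qed

lemma S2: "2 * (\<Sum>k<n. X k) \<le> G n + 2 * (\<Sum>k<n. G k) / NN"
proof -
  have "(\<Sum>k<n. 2 * X k + F k - F (Suc k)) \<le> (\<Sum>k<n. 2 * G k / NN)"
    by (rule sum_mono) (rule P2step)
  moreover have "(\<Sum>k<n. 2 * X k + F k - F (Suc k)) = 2 * (\<Sum>k<n. X k) + (F 0 - F n)"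
  proof -
    have "(\<Sum>k<n. 2 * X k + F k - F (Suc k)) = (\<Sum>k<n. 2 * X k + (F k - F (Suc k)))"
      by (simp add: algebra_simps)
    also have "\<dots> = 2 * (\<Sum>k<n. X k) + (F 0 - F n)"
      by (simp add: sum.distrib sum_lessThan_telescope' sum_distrib_left)
    finally show ?thesis .
  qed
  moreover have "(\<Sum>k<n. 2 * G k / NN) = 2 * (\<Sum>k<n. G k) / NN"
    by (simp add: sum_divide_distrib sum_distrib_left)
  ultimately show ?thesis using F_nn[of 0] F_le_G[of n] by linarith
qed

end

context setting begin

lemma NN_nat: "NN = real (R^2)" unfolding NN_def by simp

lemma S1avg: "NN * (\<Sum>k\<le>2*R^2. D k) \<le> 2 * (\<Sum>k\<le>3*R^2. M k)"
proof -
  define N where "N = R^2"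
  have NN: "NN = real N" unfolding N_def NN_nat ..
  define S where "S = (\<Sum>k\<le>3*N. M k)"
  define I where "I = {2*N<..3*N}"
  have each: "(\<Sum>k\<le>2*N. D k) \<le> M n + S / NN" if n: "n \<in> I" for n
  proof -
    have "(\<Sum>k\<le>2*N. D k) \<le> (\<Sum>k<n. D k)"
      using n unfolding I_def by (intro sum_mono2) (auto intro: D_nn)
    also have "\<dots> \<le> M n + (\<Sum>k<n. M k) / NN" by (rule S1)
    also have "(\<Sum>k<n. M k) \<le> S"
      using n unfolding I_def S_def by (intro sum_mono2) (auto intro: M_nn)
    hence "(\<Sum>k<n. M k) / NN \<le> S / NN" using NN_pos by (simp add: divide_right_mono)
    finally show ?thesis by simp
  qed
  have "(\<Sum>n\<in>I. (\<Sum>k\<le>2*N. D k)) \<le> (\<Sum>n\<in>I. M n + S / NN)"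
    by (rule sum_mono) (rule each)
  moreover have "card I = N" unfolding I_def by simp
  ultimately have "real N * (\<Sum>k\<le>2*N. D k) \<le> (\<Sum>n\<in>I. M n) + real N * (S / NN)"
    by (simp add: sum.distrib)
  moreover have "(\<Sum>n\<in>I. M n) \<le> S" unfolding I_def S_def
    by (intro sum_mono2) (auto intro: M_nn)
  moreover have "real N * (S / NN) = S" using NN_pos unfolding NN by simp
  ultimately show ?thesis unfolding NN N_def S_def by linarith
qed

lemma S2avg: "2 * NN * (\<Sum>k\<le>R^2. X k) \<le> 3 * (\<Sum>k\<le>2*R^2. G k)"
proof -
  define N where "N = R^2"
  have NN: "NN = real N" unfolding N_def NN_nat ..
  define S where "S = (\<Sum>k\<le>2*N. G k)"
  define I where "I = {N<..2*N}"
  have each: "2 * (\<Sum>k\<le>N. X k) \<le> G n + 2 * S / NN" if n: "n \<in> I" for n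
  proof -
    have "(\<Sum>k\<le>N. X k) \<le> (\<Sum>k<n. X k)"
      using n unfolding I_def by (intro sum_mono2) (auto intro: X_nn)
    hence "2 * (\<Sum>k\<le>N. X k) \<le> 2 * (\<Sum>k<n. X k)" by simp
    also have "\<dots> \<le> G n + 2 * (\<Sum>k<n. G k) / NN" by (rule S2)
    also have "(\<Sum>k<n. G k) \<le> S"
      using n unfolding I_def S_def by (intro sum_mono2) (auto intro: G_nn)
    hence "2 * (\<Sum>k<n. G k) / NN \<le> 2 * S / NN" using NN_pos by (simp add: divide_right_mono)
    finally show ?thesis by simp
  qed
  have "(\<Sum>n\<in>I. 2 * (\<Sum>k\<le>N. X k)) \<le> (\<Sum>n\<in>I. G n + 2 * S / NN)"
    by (rule sum_mono) (rule each)
  moreover have "card I = N" unfolding I_def by simp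
  ultimately have "real N * (2 * (\<Sum>k\<le>N. X k)) \<le> (\<Sum>n\<in>I. G n) + real N * (2 * S / NN)"
    by (simp add: sum.distrib)
  moreover have "(\<Sum>n\<in>I. G n) \<le> S" unfolding I_def S_def
    by (intro sum_mono2) (auto intro: G_nn)
  moreover have "real N * (2 * S / NN) = 2 * S" using NN_pos unfolding NN by simp
  ultimately show ?thesis unfolding NN N_def S_def by (simp add: algebra_simps)
qed

lemma ut_fun: "(\<lambda>y. u y (- int k)) = ut k" by (rule ext) (simp add: ut_def)

lemma sumQ_conv: "sumQ V \<rho> m x0 R Fn = (\<Sum>k\<le>R^2. \<Sum>x\<in>Bl 1. Fn x (- int k) * m x)"
proof -
  have e: "(\<Sum>t\<in>{-((int R)^2)..0}. f t) = (\<Sum>k\<le>R^2. f (-int k))" for f :: "int \<Rightarrow> real"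
    using sum_int_nat[of f "R^2"] by simp
  show ?thesis unfolding sumQ_def Bl_def e by simp
qed

lemma sumQ9: "sumQ V \<rho> m x0 (9*R) (\<lambda>x t. (u x t)^2) = (\<Sum>k\<le>81*R^2. M k)"
proof -
  have e: "(\<Sum>t\<in>{-((int (9*R))^2)..0}. f t) = (\<Sum>k\<le>81*R^2. f (-int k))" for f :: "int \<Rightarrow> real"
    using sum_int_nat[of f "81*R^2"] by (simp add: power_mult_distrib)
  have "rball V \<rho> x0 (real (9*R)) = A" unfolding A_def Bl_def by simp
  then show ?thesis unfolding sumQ_def M_def ut_def e by simp
qed

lemma main: "NN * sumQ V \<rho> m x0 R (\<lambda>x t. Gamma w m (\<lambda>y. u y t) x)
    + NN^2 * sumQ V \<rho> m x0 R (\<lambda>x t. (Dt u x t)^2)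
    \<le> 4 * sumQ V \<rho> m x0 (9*R) (\<lambda>x t. (u x t)^2)"
proof -
  define SM where "SM = (\<Sum>k\<le>3*R^2. M k)"
  define SD where "SD = (\<Sum>k\<le>2*R^2. D k)"
  have SM_nn: "0 \<le> SM" unfolding SM_def by (intro sum_nonneg M_nn)
  have q1: "sumQ V \<rho> m x0 R (\<lambda>x t. Gamma w m (\<lambda>y. u y t) x) = (\<Sum>k\<le>R^2. \<Sum>x\<in>Bl 1. Gamma w m (ut k) x * m x)"
    unfolding sumQ_conv ut_fun ..
  have dt: "Dt u x (- int k) = vt k x" for x k
  proof -
    have eqk: "- int (Suc k) = - int k - 1" by simp
    show ?thesis unfolding Dt_def vt_def ut_def eqk ..
  qed
  have q2: "sumQ V \<rho> m x0 R (\<lambda>x t. (Dt u x t)^2) = (\<Sum>k\<le>R^2. \<Sum>x\<in>Bl 1. (vt k x)^2 * m x)"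
    unfolding sumQ_conv dt ..
  have g1: "(\<Sum>k\<le>R^2. \<Sum>x\<in>Bl 1. Gamma w m (ut k) x * m x) \<le> SD / 2"
  proof -
    have "(\<Sum>k\<le>R^2. \<Sum>x\<in>Bl 1. Gamma w m (ut k) x * m x) \<le> (\<Sum>k\<le>R^2. G k / 2)"
    proof (rule sum_mono)
      fix k show "(\<Sum>x\<in>Bl 1. Gamma w m (ut k) x * m x) \<le> G k / 2" using Gam[of k] by simp
    qed
    also have "\<dots> \<le> (\<Sum>k\<le>2*R^2. G k / 2)" by (intro sum_mono2) (auto intro: G_nn)
    also have "\<dots> \<le> (\<Sum>k\<le>2*R^2. D k / 2)" by (intro sum_mono divide_right_mono G_le_D) auto
    finally show ?thesis unfolding SD_def by (simp add: sum_divide_distrib)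
  qed
  have d1: "NN * SD \<le> 2 * SM" unfolding SD_def SM_def by (rule S1avg)
  have part1: "NN * (\<Sum>k\<le>R^2. \<Sum>x\<in>Bl 1. Gamma w m (ut k) x * m x) \<le> SM"
  proof -
    have "NN * (\<Sum>k\<le>R^2. \<Sum>x\<in>Bl 1. Gamma w m (ut k) x * m x) \<le> NN * (SD / 2)"
      using g1 NN_pos by simp
    then show ?thesis using d1 by simp
  qed
  have v1: "(\<Sum>k\<le>R^2. \<Sum>x\<in>Bl 1. (vt k x)^2 * m x) \<le> (\<Sum>k\<le>R^2. X k)"
    by (rule sum_mono) (rule Vsq)
  have x1: "2 * NN * (\<Sum>k\<le>R^2. X k) \<le> 3 * SD"
  proof -
    have "(\<Sum>k\<le>2*R^2. G k) \<le> SD" unfolding SD_def by (intro sum_mono G_le_D)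
    then show ?thesis using S2avg[] by linarith
  qed
  have part2: "NN^2 * (\<Sum>k\<le>R^2. \<Sum>x\<in>Bl 1. (vt k x)^2 * m x) \<le> 3 * SM"
  proof -
    have "NN^2 * (\<Sum>k\<le>R^2. \<Sum>x\<in>Bl 1. (vt k x)^2 * m x) \<le> NN^2 * (\<Sum>k\<le>R^2. X k)"
      using v1 NN_pos by simp
    also have "\<dots> = (NN/2) * (2 * NN * (\<Sum>k\<le>R^2. X k))" by (simp add: power2_eq_square)
    also have "\<dots> \<le> (NN/2) * (3 * SD)" using x1 NN_pos by (intro mult_left_mono) auto
    also have "\<dots> = (3/2) * (NN * SD)" by simp
    also have "\<dots> \<le> (3/2) * (2 * SM)" using d1 by (simp add: mult.commute)
    finally show ?thesis by simp
  qed
  have m1: "SM \<le> sumQ V \<rho> m x0 (9*R) (\<lambda>x t. (u x t)^2)"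
    unfolding sumQ9 SM_def by (intro sum_mono2) (auto intro: M_nn)
  show ?thesis unfolding q1 q2 using part1 part2 m1 SM_nn by linarith
qed

end

theorem theorem4p1:
  shows "\<exists>C::real. \<forall>V w m \<rho> x0 (u :: nat \<Rightarrow> int \<Rightarrow> real) (R::nat).
    weighted_graph V w m \<and>
    intrinsic_pseudometric V w m \<rho> \<and>
    (\<forall>x\<in>V. \<forall>r. finite (rball V \<rho> x r)) \<and>
    (\<exists>S::real. \<forall>x y. w x y > 0 \<longrightarrow> \<rho> x y \<le> S) \<and>
    x0 \<in> V \<and>
    ancient_solution V w m u \<and>
    (\<forall>x y. w x y > 0 \<longrightarrow> \<rho> x y \<le> real R)
    \<longrightarrow>
    (real R)^2 * sumQ V \<rho> m x0 R (\<lambda>x t. Gamma w m (\<lambda>y. u y t) x)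
      + (real R)^4 * sumQ V \<rho> m x0 R (\<lambda>x t. (Dt u x t)^2)
    \<le> C * sumQ V \<rho> m x0 (9 * R) (\<lambda>x t. (u x t)^2)"
proof (intro exI[of _ 4] allI impI)
  fix V w m \<rho> x0 and u :: "nat \<Rightarrow> int \<Rightarrow> real" and R :: nat
  assume H: "weighted_graph V w m \<and>
    intrinsic_pseudometric V w m \<rho> \<and>
    (\<forall>x\<in>V. \<forall>r. finite (rball V \<rho> x r)) \<and>
    (\<exists>S::real. \<forall>x y. w x y > 0 \<longrightarrow> \<rho> x y \<le> S) \<and>
    x0 \<in> V \<and>
    ancient_solution V w m u \<and>
    (\<forall>x y. w x y > 0 \<longrightarrow> \<rho> x y \<le> real R)"
  show "(real R)^2 * sumQ V \<rho> m x0 R (\<lambda>x t. Gamma w m (\<lambda>y. u y t) x)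
      + (real R)^4 * sumQ V \<rho> m x0 R (\<lambda>x t. (Dt u x t)^2)
    \<le> 4 * sumQ V \<rho> m x0 (9 * R) (\<lambda>x t. (u x t)^2)"
  proof (cases "R = 0")
    case True
    have mp: "\<forall>x\<in>V. m x > 0" using H unfolding weighted_graph_def by blast
    have "0 \<le> sumQ V \<rho> m x0 (9 * R) (\<lambda>x t. (u x t)^2)"
      unfolding sumQ_def rball_def using mp
      by (intro sum_nonneg mult_nonneg_nonneg) (auto intro: less_imp_le)
    then show ?thesis using True by simp
  next
    case False
    then have R1: "1 \<le> R" by simp
    interpret setting V w m \<rho> x0 u R
      using H R1 by unfold_locales auto
    have "(real R)^4 = NN^2" unfolding NN_def by simp
    moreover have "(real R)^2 = NN" unfolding NN_def ..
    ultimately show ?thesis using main by simp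
  qed
qed

end
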